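(* Let $R$ be a commutative ring with identity that is not an integral domain. If the girth of $\Gamma(R)$ is $4$ or $\infty$, then either $\gamma_t(\Gamma(R)) = \gamma(\Gamma(R))$ or $R\cong \mathbb{Z}_2\times D$ for some integral domain $D$.
   Context: All rings are commutative with identity. The zero-divisor graph $\Gamma(R)$ has vertex set $Z(R)^*$ (nonzero zero-divisors); distinct $r,s$ are adjacent iff $rs=0$, and $x$ is adjacent to itself iff $x^2=0$. A dominating set is $X\subseteq Z(R)^*$ such that every vertex not in $X$ is adjacent to some element of $X$; a total dominating set is $X$ such that every vertex (including those in $X$) is adjacent to some element of $X$ (self-adjacency counts). $\gamma,\gamma_t$ are the respective minimum cardinalities. The girth is the length of a shortest cycle through distinct vertices (loops not counted), $\infty$ if none. *)

theory Defs
  imports "HOL-Algebra.Chinese_Remainder" "HOL-Number_Theory.Residues" "HOL-Library.Extended_Nat"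
begin

definition zd_vertices :: "('a, 'b) ring_scheme \<Rightarrow> 'a set" where
  "zd_vertices R = {x \<in> carrier R. x \<noteq> \<zero>\<^bsub>R\<^esub> \<and>
      (\<exists>y \<in> carrier R. y \<noteq> \<zero>\<^bsub>R\<^esub> \<and> x \<otimes>\<^bsub>R\<^esub> y = \<zero>\<^bsub>R\<^esub>)}"

text \<open>Adjacency (for x = y this is the loop condition x^2 = 0).\<close>
definition zd_adj :: "('a, 'b) ring_scheme \<Rightarrow> 'a \<Rightarrow> 'a \<Rightarrow> bool" where
  "zd_adj R x y \<longleftrightarrow> x \<otimes>\<^bsub>R\<^esub> y = \<zero>\<^bsub>R\<^esub>"

definition zd_dominating :: "('a, 'b) ring_scheme \<Rightarrow> 'a set \<Rightarrow> bool" where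
  "zd_dominating R X \<longleftrightarrow> X \<subseteq> zd_vertices R \<and>
     (\<forall>v \<in> zd_vertices R - X. \<exists>x \<in> X. zd_adj R v x)"

definition zd_total_dominating :: "('a, 'b) ring_scheme \<Rightarrow> 'a set \<Rightarrow> bool" where
  "zd_total_dominating R X \<longleftrightarrow> X \<subseteq> zd_vertices R \<and>
     (\<forall>v \<in> zd_vertices R. \<exists>x \<in> X. zd_adj R v x)"

definition ecard :: "'a set \<Rightarrow> enat" where
  "ecard X = (if finite X then enat (card X) else \<infinity>)"

definition zd_domination_number :: "('a, 'b) ring_scheme \<Rightarrow> enat" where
  "zd_domination_number R = (INF X \<in> {X. zd_dominating R X}. ecard X)"

definition zd_total_domination_number :: "('a, 'b) ring_scheme \<Rightarrow> enat" where
  "zd_total_domination_number R = (INF X \<in> {X. zd_total_dominating R X}. ecard X)"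

definition zd_has_cycle :: "('a, 'b) ring_scheme \<Rightarrow> nat \<Rightarrow> bool" where
  "zd_has_cycle R n \<longleftrightarrow> 3 \<le> n \<and> (\<exists>f :: nat \<Rightarrow> 'a. inj_on f {..<n} \<and>
      (\<forall>i < n. f i \<in> zd_vertices R \<and> zd_adj R (f i) (f (Suc i mod n))))"

definition zd_girth :: "('a, 'b) ring_scheme \<Rightarrow> enat" where
  "zd_girth R = (INF n \<in> {n. zd_has_cycle R n}. enat n)"

end

theory Submission
  imports Defs
begin


definition tri_free :: "('a, 'b) ring_scheme \<Rightarrow> bool" where
  "tri_free R \<longleftrightarrow> (\<forall>p\<in>carrier R. \<forall>q\<in>carrier R. \<forall>r\<in>carrier R.
     p \<noteq> \<zero>\<^bsub>R\<^esub> \<longrightarrow> q \<noteq> \<zero>\<^bsub>R\<^esub> \<longrightarrow> r \<noteq> \<zero>\<^bsub>R\<^esub> \<longrightarrow> p \<noteq> q \<longrightarrow> q \<noteq> r \<longrightarrow> p \<noteq> r \<longrightarrow>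
     p \<otimes>\<^bsub>R\<^esub> q = \<zero>\<^bsub>R\<^esub> \<longrightarrow> q \<otimes>\<^bsub>R\<^esub> r = \<zero>\<^bsub>R\<^esub> \<longrightarrow> p \<otimes>\<^bsub>R\<^esub> r = \<zero>\<^bsub>R\<^esub> \<longrightarrow> False)"

context cring begin

lemma V_mem: "x \<in> carrier R \<Longrightarrow> x \<noteq> \<zero> \<Longrightarrow> y \<in> carrier R \<Longrightarrow> y \<noteq> \<zero> \<Longrightarrow> x \<otimes> y = \<zero> \<Longrightarrow> x \<in> zd_vertices R"
  by (auto simp: zd_vertices_def)

lemma tfD: "tri_free R \<Longrightarrow> p\<in>carrier R \<Longrightarrow> q\<in>carrier R \<Longrightarrow> r\<in>carrier R \<Longrightarrow>
     p \<noteq> \<zero> \<Longrightarrow> q \<noteq> \<zero> \<Longrightarrow> r \<noteq> \<zero> \<Longrightarrow> p \<noteq> q \<Longrightarrow> q \<noteq> r \<Longrightarrow> p \<noteq> r \<Longrightarrow>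
     p \<otimes> q = \<zero> \<Longrightarrow> q \<otimes> r = \<zero> \<Longrightarrow> p \<otimes> r = \<zero> \<Longrightarrow> False"
  unfolding tri_free_def by blast

lemma red_tot:
  assumes tf: "tri_free R" and nosq: "\<forall>y\<in>carrier R. y \<otimes> y = \<zero> \<longrightarrow> y = \<zero>"
    and a: "a \<in> carrier R" "a \<noteq> \<zero>" and b: "b \<in> carrier R" "b \<noteq> \<zero>" and ab: "a \<otimes> b = \<zero>"
  shows "zd_total_dominating R {a, b}"
proof -
  have ba: "b \<otimes> a = \<zero>" using ab a b m_comm by simp
  have sub: "{a,b} \<subseteq> zd_vertices R" using V_mem a b ab ba by auto
  have "\<exists>x\<in>{a,b}. zd_adj R v x" if v: "v \<in> zd_vertices R" for v
  proof (rule ccontr)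
    assume "\<not> ?thesis"
    hence va: "v \<otimes> a \<noteq> \<zero>" and vb: "v \<otimes> b \<noteq> \<zero>" by (auto simp: zd_adj_def)
    from v obtain w where vc: "v \<in> carrier R" and w: "w \<in> carrier R" "w \<noteq> \<zero>" "v \<otimes> w = \<zero>"
      by (auto simp: zd_vertices_def)
    have c1: "(v \<otimes> a) \<otimes> (v \<otimes> b) = \<zero>"
    proof -
      have "(v \<otimes> a) \<otimes> (v \<otimes> b) = (v \<otimes> v) \<otimes> (a \<otimes> b)" using a b vc by (simp add: m_ac)
      thus ?thesis using ab vc by simp
    qed
    have c2: "(v \<otimes> b) \<otimes> w = \<zero>"
    proof -
      have "(v \<otimes> b) \<otimes> w = b \<otimes> (v \<otimes> w)" using w b vc by (simp add: m_ac)
      thus ?thesis using w b by simp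
    qed
    have c3: "(v \<otimes> a) \<otimes> w = \<zero>"
    proof -
      have "(v \<otimes> a) \<otimes> w = a \<otimes> (v \<otimes> w)" using w a vc by (simp add: m_ac)
      thus ?thesis using w a by simp
    qed
    have d1: "v \<otimes> a \<noteq> v \<otimes> b" using c1 nosq va vc a by (metis m_closed)
    have d2: "v \<otimes> b \<noteq> w"
    proof
      assume "v \<otimes> b = w"
      hence "(v \<otimes> b) \<otimes> (v \<otimes> b) = \<zero>"
      proof -
        assume e: "v \<otimes> b = w"
        have "(v \<otimes> b) \<otimes> (v \<otimes> b) = b \<otimes> (v \<otimes> (v \<otimes> b))" using b vc by (simp add: m_ac)
        thus ?thesis using e w b by simp
      qed
      thus False using nosq vb vc b by (metis m_closed)
    qed
    have d3: "v \<otimes> a \<noteq> w"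
    proof
      assume e: "v \<otimes> a = w"
      have "(v \<otimes> a) \<otimes> (v \<otimes> a) = a \<otimes> (v \<otimes> (v \<otimes> a))" using a vc by (simp add: m_ac)
      hence "(v \<otimes> a) \<otimes> (v \<otimes> a) = \<zero>" using e w a by simp
      thus False using nosq va vc a by (metis m_closed)
    qed
    show False using tfD[OF tf, of "v \<otimes> a" "v \<otimes> b" w] va vb w vc a b c1 c2 c3 d1 d2 d3 by simp
  qed
  thus ?thesis using sub by (auto simp: zd_total_dominating_def)
qed

end


context cring begin

lemma ann_x:
  assumes tf: "tri_free R" and x: "x \<in> carrier R" "x \<noteq> \<zero>" "x \<otimes> x = \<zero>"
    and z: "z \<in> carrier R" "z \<otimes> x \<noteq> \<zero>" and w: "w \<in> carrier R" "w \<noteq> \<zero>" "z \<otimes> w = \<zero>"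
  shows "w \<otimes> x = \<zero> \<and> w \<noteq> x \<and> w \<noteq> \<ominus> x"
proof -
  define y where "y = z \<otimes> x"
  have yc: "y \<in> carrier R" using y_def z x by simp
  have wy: "w \<otimes> y = \<zero>"
  proof -
    have "w \<otimes> y = (z \<otimes> w) \<otimes> x" using y_def z(1) w(1) x(1) by (simp add: m_ac)
    thus ?thesis using w x by simp
  qed
  have wx: "w \<otimes> x = \<zero>"
  proof (cases "y = x")
    case True thus ?thesis using wy by simp
  next
    case False
    have xy: "x \<otimes> y = \<zero>"
    proof -
      have "x \<otimes> y = z \<otimes> (x \<otimes> x)" using y_def z(1) x(1) by (simp add: m_ac)
      thus ?thesis using x z by simp
    qed
    have yy: "y \<otimes> y = \<zero>"
    proof -
      have "y \<otimes> y = (z \<otimes> z) \<otimes> (x \<otimes> x)" using y_def z(1) x(1) by (simp add: m_ac)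
      thus ?thesis using x z by simp
    qed
    have s0: "x \<oplus> y = \<zero>"
    proof (rule ccontr)
      assume ne: "x \<oplus> y \<noteq> \<zero>"
      have "x \<otimes> (x \<oplus> y) = \<zero>" using x yc xy by (simp add: r_distr)
      moreover have "y \<otimes> (x \<oplus> y) = \<zero>" using x yc xy yy by (simp add: r_distr m_comm)
      moreover have "x \<noteq> x \<oplus> y" using x yc z(2) y_def by simp
      moreover have "y \<noteq> x \<oplus> y" using x yc by (simp add: a_comm)
      moreover have "y \<noteq> \<zero>" using z(2) y_def by simp
      ultimately show False using tfD[OF tf, of x y "x \<oplus> y"] x yc not_sym[OF False] ne xy add.m_closed[OF x(1) yc] by blast
    qed
    hence "y = \<ominus> x" using x yc minus_equality[of y x] by (simp add: a_comm)
    hence "w \<otimes> (\<ominus> x) = \<zero>" using wy by simp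
    thus ?thesis using w x by (simp add: r_minus)
  qed
  have "w \<noteq> x" using z w by auto
  moreover have "w \<noteq> \<ominus> x" using z w x by (auto simp: r_minus)
  ultimately show ?thesis using wx by simp
qed

lemma sq_ne:
  assumes tf: "tri_free R" and x: "x \<in> carrier R" "x \<noteq> \<zero>" "x \<otimes> x = \<zero>"
    and u: "u \<in> carrier R" "u \<noteq> \<zero>" "u \<otimes> x = \<zero>" "u \<noteq> x" "u \<noteq> \<ominus> x"
  shows "u \<otimes> u \<noteq> \<zero>"
proof
  assume uu: "u \<otimes> u = \<zero>"
  have n0: "u \<oplus> x \<noteq> \<zero>" using u x minus_equality[of u x] by auto
  have n1: "u \<oplus> x \<noteq> u" using u x by simp
  have n2: "u \<oplus> x \<noteq> x" using u x by (simp add: a_comm)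
  have p1: "x \<otimes> (u \<oplus> x) = \<zero>" using u x by (simp add: r_distr m_comm)
  have p2: "u \<otimes> (u \<oplus> x) = \<zero>" using u x uu by (simp add: r_distr)
  show False using tfD[OF tf, of u x "u \<oplus> x"] u x n0 n1 n2 p1 p2 by simp
qed

lemma nonred_tot:
  assumes tf: "tri_free R" and x: "x \<in> carrier R" "x \<noteq> \<zero>" "x \<otimes> x = \<zero>"
  shows "\<exists>Y. zd_total_dominating R Y \<and> finite Y \<and> card Y \<le> 2"
proof (cases "\<forall>v\<in>zd_vertices R. v \<otimes> x = \<zero>")
  case True
  have "x \<in> zd_vertices R" using V_mem x by blast
  hence "zd_total_dominating R {x}" using True by (auto simp: zd_total_dominating_def zd_adj_def)
  thus ?thesis by (intro exI[of _ "{x}"]) auto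
next
  case False
  then obtain z0 where z0V: "z0 \<in> zd_vertices R" and z0x: "z0 \<otimes> x \<noteq> \<zero>" by auto
  from z0V obtain b where z0: "z0 \<in> carrier R" and b: "b \<in> carrier R" "b \<noteq> \<zero>" "z0 \<otimes> b = \<zero>"
    by (auto simp: zd_vertices_def)
  have bx: "b \<otimes> x = \<zero>" "b \<noteq> x" "b \<noteq> \<ominus> x" using ann_x[OF tf x z0 z0x b] by auto
  have xV: "x \<in> zd_vertices R" using V_mem x by blast
  have bV: "b \<in> zd_vertices R" using V_mem b bx x by blast
  have "\<exists>y\<in>{x,b}. zd_adj R v y" if v: "v \<in> zd_vertices R" for v
  proof (cases "v \<otimes> x = \<zero>")
    case True thus ?thesis by (auto simp: zd_adj_def)
  next
    case vx: False
    from v obtain w where vc: "v \<in> carrier R" and w: "w \<in> carrier R" "w \<noteq> \<zero>" "v \<otimes> w = \<zero>"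
      by (auto simp: zd_vertices_def)
    have wx: "w \<otimes> x = \<zero>" "w \<noteq> x" "w \<noteq> \<ominus> x" using ann_x[OF tf x vc vx w] by auto
    have "v \<otimes> b = \<zero>"
    proof (cases "w = b")
      case True thus ?thesis using w by simp
    next
      case wb: False
      define c where "c = b \<otimes> w"
      have cc: "c \<in> carrier R" using c_def b w by simp
      have c0: "c \<noteq> \<zero>"
      proof
        assume "c = \<zero>"
        thus False using tfD[OF tf, of x b w] x b w bx wx wb c_def by (simp add: m_comm)
      qed
      have "z0 \<otimes> c = (z0 \<otimes> b) \<otimes> w" using c_def b(1) w(1) z0 by (simp add: m_ac)
      hence cz0: "z0 \<otimes> c = \<zero>" using b w by simp
      have "c \<otimes> x = (b \<otimes> x) \<otimes> w" using c_def b(1) w(1) x(1) by (simp add: m_ac)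
      hence cx: "c \<otimes> x = \<zero>" using bx w by simp
      have "v \<otimes> c = b \<otimes> (v \<otimes> w)" using c_def b(1) w(1) vc by (simp add: m_ac)
      hence cv: "v \<otimes> c = \<zero>" using b w by simp
      have cnx: "c \<noteq> x" using cz0 z0x by auto
      have cnmx: "c \<noteq> \<ominus> x" using cz0 z0x z0 x by (auto simp: r_minus)
      have csq: "c \<otimes> c \<noteq> \<zero>" using sq_ne[OF tf x cc c0 cx cnx cnmx] .
      show ?thesis
      proof (rule ccontr)
        define u where "u = b \<otimes> v"
        assume "v \<otimes> b \<noteq> \<zero>"
        hence u0: "u \<noteq> \<zero>" using u_def b vc m_comm by simp
        have uc: "u \<in> carrier R" using u_def b vc by simp
        have "u \<otimes> x = v \<otimes> (b \<otimes> x)" using u_def b(1) vc x(1) by (simp add: m_ac)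
        hence ux: "u \<otimes> x = \<zero>" using bx vc by simp
        have "z0 \<otimes> u = (z0 \<otimes> b) \<otimes> v" using u_def b(1) vc z0 by (simp add: m_ac)
        hence uz0: "z0 \<otimes> u = \<zero>" using b vc by simp
        have "u \<otimes> c = (b \<otimes> b) \<otimes> (v \<otimes> w)" using u_def c_def b(1) vc w(1) by (simp add: m_ac)
        hence ucc: "u \<otimes> c = \<zero>" using w b by simp
        have unx: "u \<noteq> x" using uz0 z0x by auto
        show False
        proof (cases "u = c")
          case True thus False using ucc csq by simp
        next
          case False
          thus False using tfD[OF tf, of x u c] x uc cc u0 c0 unx cnx ux cx ucc
            by (simp add: m_comm)
        qed
      qed
    qed
    thus ?thesis by (auto simp: zd_adj_def)
  qed
  hence "zd_total_dominating R {x, b}" using xV bV by (auto simp: zd_total_dominating_def)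
  thus ?thesis by (intro exI[of _ "{x,b}"]) (auto simp: card_insert_if)
qed

end


lemma RDP_simps:
  "carrier (RDirProd A B) = carrier A \<times> carrier B"
  "(a, b) \<otimes>\<^bsub>RDirProd A B\<^esub> (a', b') = (a \<otimes>\<^bsub>A\<^esub> a', b \<otimes>\<^bsub>B\<^esub> b')"
  "(a, b) \<oplus>\<^bsub>RDirProd A B\<^esub> (a', b') = (a \<oplus>\<^bsub>A\<^esub> a', b \<oplus>\<^bsub>B\<^esub> b')"
  "\<one>\<^bsub>RDirProd A B\<^esub> = (\<one>\<^bsub>A\<^esub>, \<one>\<^bsub>B\<^esub>)"
  by (simp_all add: RDirProd_def DirProd_def monoid.defs)

context cring begin

lemma idem_iso:
  assumes tf: "tri_free R" and cV: "c \<in> zd_vertices R"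
    and univ: "\<forall>v\<in>zd_vertices R. v \<noteq> c \<longrightarrow> v \<otimes> c = \<zero>"
    and idem: "c \<otimes> c = c"
  shows "\<exists>D :: 'a ring. domain D \<and> R \<simeq> RDirProd (residue_ring 2) D"
proof -
  from cV obtain a where c: "c \<in> carrier R" "c \<noteq> \<zero>" and a: "a \<in> carrier R" "a \<noteq> \<zero>" "c \<otimes> a = \<zero>"
    by (auto simp: zd_vertices_def)
  define e where "e = \<one> \<ominus> c"
  have ec: "e \<in> carrier R" using e_def c by simp
  have c1: "c \<noteq> \<one>" using a by auto
  have e0: "e \<noteq> \<zero>"
  proof
    assume "e = \<zero>"
    hence "\<one> \<ominus> c = \<zero>" unfolding e_def .
    moreover have "c \<oplus> (\<one> \<ominus> c) = \<one>" using c by algebra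
    ultimately have "c = \<one>" using c by simp
    thus False using c1 by simp
  qed
  have ce: "c \<otimes> e = \<zero>" unfolding e_def using c idem by algebra
  have ee: "e \<otimes> e = e" unfolding e_def using c idem by algebra
  have dec: "r = r \<otimes> c \<oplus> r \<otimes> e" if "r \<in> carrier R" for r
    unfolding e_def using c that by algebra
  have rc: "r \<otimes> c = \<zero> \<or> r \<otimes> c = c" if r: "r \<in> carrier R" for r
  proof (rule ccontr)
    assume h: "\<not> ?thesis"
    have "(r \<otimes> c) \<otimes> e = r \<otimes> (c \<otimes> e)" using r c ec by (simp add: m_assoc)
    hence "(r \<otimes> c) \<otimes> e = \<zero>" using ce r by simp
    hence "r \<otimes> c \<in> zd_vertices R" using V_mem[of "r \<otimes> c" e] h r c ec e0 by simp
    hence "(r \<otimes> c) \<otimes> c = \<zero>" using univ h by blast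
    moreover have "(r \<otimes> c) \<otimes> c = r \<otimes> c" using r c idem by (simp add: m_assoc)
    ultimately show False using h by simp
  qed
  have cc0: "c \<oplus> c = \<zero>"
  proof -
    have "(\<one> \<oplus> \<one>) \<otimes> c = c \<oplus> c" using c by (simp add: l_distr)
    hence "c \<oplus> c = \<zero> \<or> c \<oplus> c = c" using rc[of "\<one> \<oplus> \<one>"] by simp
    thus ?thesis using c by auto
  qed
  define D where "D = \<lparr>carrier = (\<lambda>r. r \<otimes> e) ` carrier R, monoid.mult = (\<otimes>), one = e,
     zero = \<zero>, add = (\<oplus>)\<rparr>"
  have Dsimps: "carrier D = (\<lambda>r. r \<otimes> e) ` carrier R" "monoid.mult D = (\<otimes>)" "one D = e" "zero D = \<zero>"
    "add D = (\<oplus>)" by (simp_all add: D_def)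
  have Dcar: "x \<in> carrier D \<longleftrightarrow> (\<exists>r\<in>carrier R. x = r \<otimes> e)" for x
    unfolding Dsimps(1) image_iff by (rule refl)
  have Dsub: "carrier D \<subseteq> carrier R" using ec Dcar by auto
  have Dadd: "x \<oplus> y \<in> carrier D" if xyD: "x \<in> carrier D" "y \<in> carrier D" for x y
  proof -
    obtain r s where "r \<in> carrier R" "s \<in> carrier R" "x = r \<otimes> e" "y = s \<otimes> e"
      using xyD Dcar by meson
    thus ?thesis using ec unfolding Dcar by (intro bexI[of _ "r \<oplus> s"]) (auto simp: l_distr)
  qed
  have Dmul: "x \<otimes> y \<in> carrier D" if xyD: "x \<in> carrier D" "y \<in> carrier D" for x y
  proof -
    obtain r s where rs: "r \<in> carrier R" "s \<in> carrier R" "x = r \<otimes> e" "y = s \<otimes> e"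
      using xyD Dcar by meson
    have "x \<otimes> y = (r \<otimes> s) \<otimes> (e \<otimes> e)" using rs(1,2) ec rs(3,4) by (simp add: m_ac)
    hence "x \<otimes> y = (r \<otimes> s) \<otimes> e" using ee by simp
    thus ?thesis using rs unfolding Dcar by (intro bexI[of _ "r \<otimes> s"]) auto
  qed
  have Dzero: "\<zero> \<in> carrier D" unfolding Dcar using ec by (intro bexI[of _ "\<zero>"]) auto
  have Done: "e \<in> carrier D" unfolding Dcar using ec by (intro bexI[of _ "\<one>"]) auto
  have Dneg: "\<exists>y\<in>carrier D. y \<oplus> x = \<zero>" if xD: "x \<in> carrier D" for x
  proof -
    obtain r where r: "r \<in> carrier R" "x = r \<otimes> e" using xD Dcar by meson
    have "(\<ominus> r) \<otimes> e \<oplus> x = \<zero>" using r ec by (simp add: l_minus l_neg)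
    moreover have "(\<ominus> r) \<otimes> e \<in> carrier D" unfolding Dcar using r by (intro bexI[of _ "\<ominus> r"]) auto
    ultimately show ?thesis by blast
  qed
  have Dlone: "e \<otimes> x = x" if xD: "x \<in> carrier D" for x
  proof -
    obtain r where r: "r \<in> carrier R" "x = r \<otimes> e" using xD Dcar by meson
    have "e \<otimes> x = r \<otimes> (e \<otimes> e)" using r ec by (simp add: m_ac)
    thus ?thesis using ee r by simp
  qed
  have cD: "cring D"
  proof (rule cringI)
    show "abelian_group D"
      by (rule abelian_groupI) (use Dsub Dadd Dzero Dneg in \<open>auto simp: Dsimps(2-5) a_ac subset_iff\<close>)
    show "comm_monoid D"
      by (rule comm_monoidI) (use Dsub Dmul Done Dlone in \<open>auto simp: Dsimps(2-5) m_ac subset_iff\<close>)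
    show "\<And>x y z. x \<in> carrier D \<Longrightarrow> y \<in> carrier D \<Longrightarrow> z \<in> carrier D \<Longrightarrow>
      (x \<oplus>\<^bsub>D\<^esub> y) \<otimes>\<^bsub>D\<^esub> z = x \<otimes>\<^bsub>D\<^esub> z \<oplus>\<^bsub>D\<^esub> y \<otimes>\<^bsub>D\<^esub> z"
      using Dsub by (auto simp: Dsimps(2-5) l_distr subset_iff)
  qed
  have intg: "x = \<zero> \<or> y = \<zero>" if xy: "x \<otimes> y = \<zero>" "x \<in> carrier D" "y \<in> carrier D" for x y
  proof (rule ccontr)
    assume nz: "\<not> ?thesis"
    have xc0: "x \<otimes> c = \<zero>" if xD: "x \<in> carrier D" for x
    proof -
      obtain r where r: "r \<in> carrier R" "x = r \<otimes> e" using xD Dcar by meson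
      have "x \<otimes> c = r \<otimes> (c \<otimes> e)" using r ec c by (simp add: m_ac)
      thus ?thesis using ce r by simp
    qed
    have xR: "x \<in> carrier R" "y \<in> carrier R" using xy Dsub by auto
    have xc: "x \<otimes> c = \<zero>" "y \<otimes> c = \<zero>" using xc0 xy by auto
    have xnc: "x \<noteq> c" "y \<noteq> c" using xc idem c by auto
    show False
    proof (cases "x = y")
      case False
      thus False using tfD[OF tf, of x y c] xR c nz xnc xy xc by (simp add: m_comm)
    next
      case True
      define v where "v = c \<oplus> x"
      have vR: "v \<in> carrier R" using v_def c xR by simp
      have vc: "v \<otimes> c = c" using v_def c xR idem xc by (simp add: l_distr)
      have v0: "v \<noteq> \<zero>" using vc c by auto
      have "v \<otimes> x = c \<otimes> x \<oplus> x \<otimes> x" using v_def c xR by (simp add: l_distr)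
      moreover have "c \<otimes> x = \<zero>" using xc(1) c xR by (simp add: m_comm)
      ultimately have vx: "v \<otimes> x = \<zero>" using xy(1) True by simp
      have "v \<in> zd_vertices R" using V_mem[OF vR v0 xR(1)] vx nz True by simp
      moreover have "v \<noteq> c" using v_def c xR nz True by simp
      ultimately have "v \<otimes> c = \<zero>" using univ by blast
      thus False using vc c by simp
    qed
  qed
  have dD: "domain D"
    by (rule domain.intro[OF cD], rule domain_axioms.intro)
       (use e0 intg in \<open>auto simp: Dsimps(2-5)\<close>)
  define bit where "bit r = (if r \<otimes> c = \<zero> then 0 else 1 :: int)" for r
  define \<phi> where "\<phi> r = (bit r, r \<otimes> e)" for r
  have car2: "carrier (residue_ring 2) = {0, 1}" by (auto simp: residue_ring_def)
  have hom: "\<phi> \<in> ring_hom R (RDirProd (residue_ring 2) D)"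
  proof (rule ring_hom_memI)
    fix x assume "x \<in> carrier R"
    thus "\<phi> x \<in> carrier (RDirProd (residue_ring 2) D)"
      by (auto simp: \<phi>_def bit_def RDP_simps car2 Dcar)
  next
    fix x y assume xy: "x \<in> carrier R" "y \<in> carrier R"
    have "(x \<otimes> c) \<otimes> (y \<otimes> c) = (x \<otimes> y) \<otimes> (c \<otimes> c)" using xy c by (simp add: m_ac)
    hence m: "(x \<otimes> y) \<otimes> c = (x \<otimes> c) \<otimes> (y \<otimes> c)" using idem by simp
    have bm: "bit (x \<otimes> y) = (bit x * bit y) mod 2"
      using rc[OF xy(1)] rc[OF xy(2)] m c idem by (auto simp: bit_def)
    have "(x \<otimes> e) \<otimes> (y \<otimes> e) = (x \<otimes> y) \<otimes> (e \<otimes> e)" using xy ec by (simp add: m_ac)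
    hence me: "(x \<otimes> y) \<otimes> e = (x \<otimes> e) \<otimes> (y \<otimes> e)" using ee by simp
    show "\<phi> (x \<otimes> y) = \<phi> x \<otimes>\<^bsub>RDirProd (residue_ring 2) D\<^esub> \<phi> y"
      using bm me by (simp add: \<phi>_def RDP_simps residue_ring_def Dsimps(2-5))
    have a: "(x \<oplus> y) \<otimes> c = (x \<otimes> c) \<oplus> (y \<otimes> c)" using xy c by (simp add: l_distr)
    have ba: "bit (x \<oplus> y) = (bit x + bit y) mod 2"
      using rc[OF xy(1)] rc[OF xy(2)] a c cc0 by (auto simp: bit_def)
    have ae: "(x \<oplus> y) \<otimes> e = (x \<otimes> e) \<oplus> (y \<otimes> e)" using xy ec by (simp add: l_distr)
    show "\<phi> (x \<oplus> y) = \<phi> x \<oplus>\<^bsub>RDirProd (residue_ring 2) D\<^esub> \<phi> y"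
      using ba ae by (simp add: \<phi>_def RDP_simps residue_ring_def Dsimps(2-5))
  next
    show "\<phi> \<one> = \<one>\<^bsub>RDirProd (residue_ring 2) D\<^esub>"
      using c ec by (simp add: \<phi>_def bit_def RDP_simps residue_ring_def Dsimps(2-5))
  qed
  have inj: "inj_on \<phi> (carrier R)"
  proof (rule inj_onI)
    fix x y assume xy: "x \<in> carrier R" "y \<in> carrier R" and eq: "\<phi> x = \<phi> y"
    have "x \<otimes> c = y \<otimes> c" using eq rc[OF xy(1)] rc[OF xy(2)] c
      by (auto simp: \<phi>_def bit_def split: if_splits)
    moreover have "x \<otimes> e = y \<otimes> e" using eq by (simp add: \<phi>_def)
    ultimately show "x = y" using dec[OF xy(1)] dec[OF xy(2)] by simp
  qed
  have surj: "\<phi> ` carrier R = carrier (RDirProd (residue_ring 2) D)"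
  proof
    show "\<phi> ` carrier R \<subseteq> carrier (RDirProd (residue_ring 2) D)"
      using hom by (auto simp: ring_hom_def)
  next
    show "carrier (RDirProd (residue_ring 2) D) \<subseteq> \<phi> ` carrier R"
    proof
      fix p assume "p \<in> carrier (RDirProd (residue_ring 2) D)"
      then obtain k s where p: "p = (k, s \<otimes> e)" "k = 0 \<or> k = 1" "s \<in> carrier R"
        by (auto simp: RDP_simps car2 Dcar)
      define r where "r = (if k = 0 then \<zero> else c) \<oplus> s \<otimes> e"
      have rR: "r \<in> carrier R" using r_def c p ec by auto
      have "r \<otimes> c = (if k = 0 then \<zero> else c)"
      proof -
        have "(s \<otimes> e) \<otimes> c = s \<otimes> (c \<otimes> e)" using p ec c by (simp add: m_ac)
        hence "(s \<otimes> e) \<otimes> c = \<zero>" using ce p by simp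
        thus ?thesis using r_def c p ec idem by (auto simp: l_distr)
      qed
      hence "bit r = k" using p c by (auto simp: bit_def)
      moreover have "r \<otimes> e = s \<otimes> e"
      proof -
        have "(s \<otimes> e) \<otimes> e = s \<otimes> e" using p ec ee by (simp add: m_assoc)
        thus ?thesis using r_def c p ec ce by (auto simp: l_distr)
      qed
      ultimately have "\<phi> r = p" using p by (simp add: \<phi>_def)
      thus "p \<in> \<phi> ` carrier R" using rR by blast
    qed
  qed
  have "\<phi> \<in> ring_iso R (RDirProd (residue_ring 2) D)"
    using hom inj surj by (simp add: ring_iso_def bij_betw_def)
  hence "R \<simeq> RDirProd (residue_ring 2) D" by (auto simp: is_ring_iso_def)
  thus ?thesis using dD by (intro exI[of _ D]) simp
qed

end


lemma tot_imp_dom: "zd_total_dominating R X \<Longrightarrow> zd_dominating R X"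
  by (auto simp: zd_total_dominating_def zd_dominating_def)

lemma gamma_le: "zd_domination_number R \<le> zd_total_domination_number R"
  unfolding zd_domination_number_def zd_total_domination_number_def
  by (rule INF_superset_mono) (auto intro: tot_imp_dom)

lemma tot_le: "zd_total_dominating R Y \<Longrightarrow> finite Y \<Longrightarrow> zd_total_domination_number R \<le> enat (card Y)"
  unfolding zd_total_domination_number_def
  by (rule INF_lower2[of Y]) (auto simp: ecard_def)

lemma dom_ne: "zd_vertices R \<noteq> {} \<Longrightarrow> zd_dominating R X \<Longrightarrow> X \<noteq> {}"
  by (auto simp: zd_dominating_def)

lemma gamma_ge1: assumes "zd_vertices R \<noteq> {}" shows "1 \<le> zd_domination_number R"
  unfolding zd_domination_number_def
proof (rule INF_greatest)
  fix X assume "X \<in> {X. zd_dominating R X}"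
  hence "X \<noteq> {}" using dom_ne[OF assms(1), of X] by auto
  thus "1 \<le> ecard X"
    by (cases "finite X") (auto simp: ecard_def one_enat_def Suc_le_eq card_gt_0_iff)
qed

lemma gamma_ge2: assumes "zd_vertices R \<noteq> {}" and "\<forall>c. \<not> zd_dominating R {c}"
  shows "2 \<le> zd_domination_number R"
  unfolding zd_domination_number_def
proof (rule INF_greatest)
  fix X assume X: "X \<in> {X. zd_dominating R X}"
  hence ne: "X \<noteq> {}" using dom_ne[OF assms(1), of X] by auto
  have ns: "\<forall>c. X \<noteq> {c}" using X assms by auto
  show "2 \<le> ecard X"
  proof (cases "finite X")
    case True
    have "card X \<noteq> 0" using True ne by simp
    moreover have "card X \<noteq> 1" using ns by (auto simp: card_1_singleton_iff)
    ultimately have "2 \<le> card X" by linarith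
    thus ?thesis using True by (simp add: ecard_def numeral_eq_enat)
  qed (simp add: ecard_def)
qed

lemma girth_tf:
  assumes cr: "cring R" and g: "zd_girth R = 4 \<or> zd_girth R = \<infinity>"
  shows "tri_free R"
proof (rule ccontr)
  assume "\<not> tri_free R"
  then obtain p q r where pqr: "p\<in>carrier R" "q\<in>carrier R" "r\<in>carrier R"
     "p \<noteq> \<zero>\<^bsub>R\<^esub>" "q \<noteq> \<zero>\<^bsub>R\<^esub>" "r \<noteq> \<zero>\<^bsub>R\<^esub>" "p \<noteq> q" "q \<noteq> r" "p \<noteq> r"
     "p \<otimes>\<^bsub>R\<^esub> q = \<zero>\<^bsub>R\<^esub>" "q \<otimes>\<^bsub>R\<^esub> r = \<zero>\<^bsub>R\<^esub>" "p \<otimes>\<^bsub>R\<^esub> r = \<zero>\<^bsub>R\<^esub>"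
    unfolding tri_free_def by blast
  have rp: "r \<otimes>\<^bsub>R\<^esub> p = \<zero>\<^bsub>R\<^esub>" using pqr cring.cring_simprules(14)[OF cr] by metis
  define f :: "nat \<Rightarrow> _" where "f i = (if i = 0 then p else if i = 1 then q else r)" for i
  have V: "p \<in> zd_vertices R" "q \<in> zd_vertices R" "r \<in> zd_vertices R"
    using pqr rp unfolding zd_vertices_def by auto
  have "zd_has_cycle R 3"
    unfolding zd_has_cycle_def
  proof (intro conjI exI[of _ f])
    have "{..<3::nat} = {0,1,2}" by auto
    thus "inj_on f {..<3}" using pqr by (auto simp: f_def inj_on_def)
    show "\<forall>i<3. f i \<in> zd_vertices R \<and> zd_adj R (f i) (f (Suc i mod 3))"
    proof (intro allI impI)
      fix i :: nat assume "i < 3"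
      hence "i = 0 \<or> i = 1 \<or> i = 2" by auto
      thus "f i \<in> zd_vertices R \<and> zd_adj R (f i) (f (Suc i mod 3))"
        using V pqr rp by (auto simp: f_def zd_adj_def)
    qed
  qed simp
  hence "zd_girth R \<le> enat 3" unfolding zd_girth_def by (auto intro!: Inf_lower)
  thus False using g by (auto simp: numeral_eq_enat)
qed

context cring begin

lemma main:
  assumes tf: "tri_free R"
  shows "zd_total_domination_number R = zd_domination_number R
         \<or> (\<exists>D :: 'a ring. domain D \<and> R \<simeq> RDirProd (residue_ring 2) D)"
proof (cases "zd_vertices R = {}")
  case True
  have "zd_total_dominating R {}" using True by (auto simp: zd_total_dominating_def)
  hence "zd_total_domination_number R \<le> 0" using tot_le[of R "{}"] by (simp add: zero_enat_def)
  hence "zd_total_domination_number R = 0" by simp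
  moreover have "zd_domination_number R = 0" using gamma_le[of R] calculation by simp
  ultimately show ?thesis by simp
next
  case Vne: False
  have le2: "zd_total_domination_number R \<le> 2"
  proof -
    have "\<exists>Y. zd_total_dominating R Y \<and> finite Y \<and> card Y \<le> 2"
    proof (cases "\<exists>x\<in>carrier R. x \<noteq> \<zero> \<and> x \<otimes> x = \<zero>")
      case True
      then obtain x where "x \<in> carrier R" "x \<noteq> \<zero>" "x \<otimes> x = \<zero>" by blast
      thus ?thesis using nonred_tot[OF tf] by blast
    next
      case False
      hence nosq: "\<forall>y\<in>carrier R. y \<otimes> y = \<zero> \<longrightarrow> y = \<zero>" by blast
      from Vne obtain a where "a \<in> zd_vertices R" by blast
      then obtain b where a: "a \<in> carrier R" "a \<noteq> \<zero>" and b: "b \<in> carrier R" "b \<noteq> \<zero>" "a \<otimes> b = \<zero>"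
        by (auto simp: zd_vertices_def)
      have "zd_total_dominating R {a, b}" using red_tot[OF tf nosq a b] .
      thus ?thesis by (intro exI[of _ "{a,b}"]) (auto simp: card_insert_if)
    qed
    then obtain Y where Y: "zd_total_dominating R Y" "finite Y" "card Y \<le> 2" by blast
    have "zd_total_domination_number R \<le> enat (card Y)" using tot_le Y by blast
    also have "\<dots> \<le> 2" using Y(3) by (simp add: numeral_eq_enat)
    finally show ?thesis .
  qed
  have ge1: "1 \<le> zd_domination_number R" using gamma_ge1[OF Vne] .
  have gle: "zd_domination_number R \<le> zd_total_domination_number R" by (rule gamma_le)
  show ?thesis
  proof (cases "\<exists>c. zd_dominating R {c}")
    case False
    hence "2 \<le> zd_domination_number R" using gamma_ge2[OF Vne] by blast
    hence "zd_total_domination_number R = zd_domination_number R" using le2 gle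
      by (meson antisym order.trans)
    thus ?thesis by simp
  next
    case True
    then obtain c where cd: "zd_dominating R {c}" by blast
    hence cV: "c \<in> zd_vertices R" and univ: "\<forall>v\<in>zd_vertices R. v \<noteq> c \<longrightarrow> v \<otimes> c = \<zero>"
      by (auto simp: zd_dominating_def zd_adj_def)
    from cV obtain a where c: "c \<in> carrier R" "c \<noteq> \<zero>" and a: "a \<in> carrier R" "a \<noteq> \<zero>" "c \<otimes> a = \<zero>"
      by (auto simp: zd_vertices_def)
    have one: ?thesis if Y: "zd_total_dominating R {y}" for y
    proof -
      have "zd_total_domination_number R \<le> enat 1" using tot_le[OF Y] by simp
      hence "zd_total_domination_number R \<le> 1" by (simp add: one_enat_def)
      hence "zd_total_domination_number R = zd_domination_number R" using ge1 gle
        by (meson antisym order.trans)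
      thus ?thesis by simp
    qed
    consider "c \<otimes> c = \<zero>" | "c \<otimes> c = c" | "c \<otimes> c \<noteq> \<zero>" "c \<otimes> c \<noteq> c" by blast
    thus ?thesis
    proof cases
      case 1
      have "zd_total_dominating R {c}" using cV univ 1
        by (auto simp: zd_total_dominating_def zd_adj_def)
      thus ?thesis by (rule one)
    next
      case 2
      thus ?thesis using idem_iso[OF tf cV univ] by blast
    next
      case 3
      define d where "d = c \<otimes> c"
      have dR: "d \<in> carrier R" using d_def c by simp
      have da: "d \<otimes> a = \<zero>" using d_def c a by (simp add: m_assoc)
      have dV: "d \<in> zd_vertices R" using V_mem[OF dR _ a(1,2) da] 3 d_def by simp
      have dc: "d \<otimes> c = \<zero>" using univ dV 3 d_def by blast
      have cd': "c \<otimes> d = \<zero>" using dc c dR by (simp add: m_comm)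
      have dd: "d \<otimes> d = \<zero>"
      proof -
        have "d \<otimes> d = c \<otimes> (d \<otimes> c)" using d_def c by (simp add: m_ac)
        thus ?thesis using dc c by simp
      qed
      have "zd_total_dominating R {d}"
        unfolding zd_total_dominating_def zd_adj_def
      proof (intro conjI ballI)
        show "{d} \<subseteq> zd_vertices R" using dV by simp
        fix v assume v: "v \<in> zd_vertices R"
        hence vR: "v \<in> carrier R" by (simp add: zd_vertices_def)
        show "\<exists>x\<in>{d}. v \<otimes> x = \<zero>"
        proof (cases "v = c")
          case True thus ?thesis using cd' by simp
        next
          case False
          hence "v \<otimes> c = \<zero>" using univ v by blast
          hence "v \<otimes> d = \<zero>" using d_def vR c by (metis m_assoc l_null)
          thus ?thesis by simp
        qed
      qed
      thus ?thesis by (rule one)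
    qed
  qed
qed

end

theorem corollary3p6:
  fixes R :: "('a, 'b) ring_scheme"
  assumes "cring R"
    and "\<not> domain R"
    and "zd_girth R = 4 \<or> zd_girth R = \<infinity>"
  shows "zd_total_domination_number R = zd_domination_number R
         \<or> (\<exists>D :: 'a ring. domain D \<and> R \<simeq> RDirProd (residue_ring 2) D)"
  using cring.main[OF assms(1) girth_tf[OF assms(1) assms(3)]] .

end
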